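(* For real $p\neq 0$, the inequality $\frac{2}{3}\left( \frac{\sinh x}{x}\right) ^{p}+\frac{1}{3}\left( \frac{\tanh x}{x}\right) ^{p}>1$ holds for all $x\in(0,\infty)$ if and only if $p>0$ or $p\leq -\frac{4}{5}$. *)

theory Defs
  imports Complex_Main
begin

end

theory Submission
  imports Defs "HOL-Analysis.Convex" "HOL-Real_Asymp.Real_Asymp"
begin

lemma poly_ineq:
  fixes q :: real assumes "q > 1"
  shows "243 * (2*q^3+1)^4 < q^2 * (2+q^2)^9"
proof -
  define z where "z = q - 1"
  have z: "z > 0" using assms z_def by simp
  have q: "q = 1 + z" using z_def by simp
  have e: "q^2 * (2+q^2)^9 - 243 * (2*q^3+1)^4 = z^3 * (43740 + 295245*z + 991440*z^2 + 2157192*z^3 + 3368304*z^4 + 3975102*z^5 + 3656528*z^6 + 2678704*z^7 + 1591928*z^8 + 781482*z^9 + 321792*z^10 + 111792*z^11 + 32496*z^12 + 7743*z^13 + 1464*z^14 + 208*z^15 + 20*z^16 + z^17)"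
    unfolding q by algebra
  have "0 < z^3 * (43740 + 295245*z + 991440*z^2 + 2157192*z^3 + 3368304*z^4 + 3975102*z^5 + 3656528*z^6 + 2678704*z^7 + 1591928*z^8 + 781482*z^9 + 321792*z^10 + 111792*z^11 + 32496*z^12 + 7743*z^13 + 1464*z^14 + 208*z^15 + 20*z^16 + z^17)"
    using z by (intro mult_pos_pos add_pos_nonneg) auto
  with e show ?thesis by linarith
qed
lemma keyA:
  fixes y :: real assumes "y > 1"
  shows "(2*y^6+1)/(3*y) < ((2+y^4)/3) powr (9/4)"
proof -
  define M where "M = (2+y^4)/3"
  define K where "K = (2*y^6+1)/(3*y)"
  have Mpos: "M > 0" unfolding M_def using assms by (simp add: add_pos_nonneg)
  have Kpos: "K > 0" unfolding K_def using assms by (simp add: add_pos_nonneg)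
  have "243 * (2*(y^2)^3+1)^4 < (y^2)^2 * (2+(y^2)^2)^9"
    by (rule poly_ineq) (use assms in \<open>simp add: one_less_power\<close>)
  hence P: "243 * (2*y^6+1)^4 < y^4 * (2+y^4)^9"
    by (simp flip: power_mult)
  have e1: "K^4 = (2*y^6+1)^4 / (81 * y^4)" unfolding K_def
    by (simp add: power_divide power_mult_distrib)
  have e2: "M^9 = (2+y^4)^9 / 19683" unfolding M_def
    by (simp add: power_divide)
  have y4: "y^4 > 0" using assms by simp
  have "(2*y^6+1)^4 / (81 * y^4) < (2+y^4)^9 / 19683"
    using P y4 by (simp add: divide_less_eq less_divide_eq mult.commute mult.left_commute)
  hence "K^4 < M^9" using e1 e2 by simp
  also have "M^9 = (M powr (9/4))^4"
    using Mpos by (simp add: powr_power)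
  finally have "K^4 < (M powr (9/4))^4" .
  hence "K < M powr (9/4)"
    by (rule power_less_imp_less_base) simp
  thus ?thesis unfolding K_def M_def .
qed



lemma derivA_neg:
  fixes t :: real assumes "t > 0"
  shows "cosh t * ((2 + cosh t powr (4/5))/3) powr (-5/4) + sinh t * ((-5/4) * ((2 + cosh t powr (4/5))/3) powr (-5/4 - 1) * (((4/5) * cosh t powr (4/5 - 1) * sinh t)/3)) - 1 < 0"
proof -
  define c where "c = cosh t"
  have c1: "c > 1" unfolding c_def using assms
    by (metis cosh_real_ge_1 cosh_real_one_iff less_eq_real_def less_irrefl)
  define y where "y = c powr (1/5)"
  have y1: "y > 1" unfolding y_def using c1 by simp
  have cy: "c = y^5" unfolding y_def using c1 by (simp add: powr_power)
  have c4: "c powr (4/5) = y^4" unfolding y_def using c1 by (simp add: powr_power)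
  have c15: "c powr (4/5 - 1) = 1/y" unfolding y_def using c1
    by (simp add: powr_minus_divide[symmetric] powr_powr)
  define M where "M = (2+y^4)/3"
  have Mpos: "M > 0" unfolding M_def using y1 by (simp add: add_pos_nonneg)
  define P where "P = M powr (9/4)"
  have Ppos: "P > 0" unfolding P_def using Mpos by simp
  have m54: "M powr (-5/4) = M / P"
  proof -
    have "M powr (1 - 9/4) = M powr 1 / M powr (9/4)" by (rule powr_diff)
    moreover have "(1 - 9/4::real) = -5/4" by simp
    ultimately show ?thesis using Mpos unfolding P_def by simp
  qed
  have m94: "M powr (-5/4 - 1) = 1 / P" unfolding P_def using Mpos
    by (simp add: powr_minus_divide[symmetric])
  have s2: "sinh t ^ 2 = y^10 - 1"
  proof -
    have "(y::real)^10 = (y^5)^2" by (simp flip: power_mult)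
    thus ?thesis using cosh_square_eq[of t] cy unfolding c_def by simp
  qed
  have M': "(2 + cosh t powr (4/5))/3 = M" unfolding M_def c_def[symmetric] c4 ..
  have "cosh t * ((2 + cosh t powr (4/5))/3) powr (-5/4) + sinh t * ((-5/4) * ((2 + cosh t powr (4/5))/3) powr (-5/4 - 1) * (((4/5) * cosh t powr (4/5 - 1) * sinh t)/3)) - 1
      = c * (M / P) + sinh t * ((-5/4) * (1 / P) * (((4/5) * (1/y) * sinh t)/3)) - 1"
    unfolding c_def[symmetric] c4 c15 M_def[symmetric] m54 m94 ..
  also have "\<dots> = y^5 * (M / P) + sinh t * ((-5/4) * (1 / P) * (((4/5) * (1/y) * sinh t)/3)) - 1"
    by (simp only: cy)
  also have "\<dots> = (y^5 * M - sinh t ^ 2 / (3*y)) / P - 1"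
    using y1 Ppos by (simp add: power2_eq_square field_simps)
  also have "y^5 * M - sinh t ^ 2 / (3*y) = (2*y^6+1)/(3*y)"
    unfolding s2 M_def using y1 apply (simp add: field_simps) by algebra
  also have "(2*y^6+1)/(3*y) / P - 1 < 0"
  proof -
    have "(2*y^6+1)/(3*y) < P" using keyA[OF y1] unfolding P_def M_def .
    hence "(2*y^6+1)/(3*y) / P < 1" using Ppos by (simp only: divide_less_eq_1_pos)
    thus ?thesis by linarith
  qed
  finally show ?thesis .
qed
lemma sinh_upper:
  fixes x :: real assumes "x > 0"
  shows "sinh x < x * ((2 + cosh x powr (4/5))/3) powr (5/4)"
proof -
  define H where "H = (\<lambda>t::real. sinh t * ((2 + cosh t powr (4/5))/3) powr (-5/4) - t)"
  define D where "D = (\<lambda>t::real. cosh t * ((2 + cosh t powr (4/5))/3) powr (-5/4) + sinh t * ((-5/4) * ((2 + cosh t powr (4/5))/3) powr (-5/4 - 1) * (((4/5) * cosh t powr (4/5 - 1) * sinh t)/3)) - 1)"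
  have d: "DERIV H t :> D t" for t
    unfolding H_def D_def
    by (rule derivative_eq_intros refl | simp add: add_pos_nonneg)+
  have "H x < H 0"
  proof (rule DERIV_neg_imp_decreasing_open[OF assms])
    fix t :: real assume "0 < t" "t < x"
    thus "\<exists>y. DERIV H t :> y \<and> y < 0" using d derivA_neg[of t] unfolding D_def by blast
  next
    show "continuous_on {0..x} H"
      using d by (intro continuous_at_imp_continuous_on) (blast intro: DERIV_isCont)
  qed
  hence h: "sinh x * ((2 + cosh x powr (4/5))/3) powr (-5/4) < x" unfolding H_def by simp
  define M where "M = (2 + cosh x powr (4/5))/3"
  have Mpos: "M > 0" unfolding M_def by (simp add: add_pos_nonneg)
  have "sinh x * M powr (-5/4) < x" using h unfolding M_def .
  moreover have "M powr (-5/4) = 1 / M powr (5/4)" using powr_minus_divide[of M "5/4"] by simp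
  ultimately have "sinh x / M powr (5/4) < x" by simp
  hence "sinh x < x * M powr (5/4)" using Mpos by (simp add: divide_less_eq)
  thus ?thesis unfolding M_def .
qed


lemma derivL_pos:
  fixes t :: real assumes "t > 0"
  shows "cosh t * cosh t powr (-1/3) + sinh t * ((-1/3) * cosh t powr (-1/3 - 1) * sinh t) - 1 > 0"
proof -
  define c where "c = cosh t"
  have c1: "c > 1" unfolding c_def using assms
    by (metis cosh_real_ge_1 cosh_real_one_iff less_eq_real_def less_irrefl)
  define y where "y = c powr (1/3)"
  have y1: "y > 1" unfolding y_def using c1 by simp
  have "y^2 > 1" using y1 by (simp add: one_less_power)
  have cy: "c = y^3" unfolding y_def using c1 by (simp add: powr_power)
  have c13: "c powr (-1/3) = 1/y" unfolding y_def using c1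
    by (simp add: powr_minus_divide[symmetric])
  have c43: "c powr (-1/3 - 1) = 1/y^4" unfolding y_def using c1
    by (simp add: powr_minus_divide[symmetric] powr_power)
  have s2: "sinh t ^ 2 = y^6 - 1"
  proof -
    have "(y::real)^6 = (y^3)^2" by (simp flip: power_mult)
    thus ?thesis using cosh_square_eq[of t] cy unfolding c_def by simp
  qed
  have "cosh t * cosh t powr (-1/3) + sinh t * ((-1/3) * cosh t powr (-1/3 - 1) * sinh t) - 1
      = c * (1/y) + sinh t * ((-1/3) * (1/y^4) * sinh t) - 1"
    unfolding c_def[symmetric] c13 c43 ..
  also have "\<dots> = y^3 * (1/y) - sinh t ^ 2 / (3*y^4) - 1"
    by (simp add: cy power2_eq_square)
  also have "\<dots> = (y^2 - 1)^2 * (2*y^2+1) / (3*y^4)"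
    unfolding s2 using y1 apply (simp add: field_simps) by algebra
  also have "\<dots> > 0" proof -
    have "(y^2-1)^2 > 0" using \<open>y^2 > 1\<close> by simp
    moreover have "2*y^2+1 > 0" using zero_le_power2[of y] by linarith
    ultimately show ?thesis using y1 by simp
  qed
  finally show ?thesis .
qed

lemma sinh_lower:
  fixes x :: real assumes "x > 0"
  shows "x * cosh x powr (1/3) < sinh x"
proof -
  define H where "H = (\<lambda>t::real. sinh t * cosh t powr (-1/3) - t)"
  define D where "D = (\<lambda>t::real. cosh t * cosh t powr (-1/3) + sinh t * ((-1/3) * cosh t powr (-1/3 - 1) * sinh t) - 1)"
  have d: "DERIV H t :> D t" for t
    unfolding H_def D_def
    by (rule derivative_eq_intros refl | simp)+
  have "H 0 < H x"
  proof (rule DERIV_pos_imp_increasing_open[OF assms])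
    fix t :: real assume "0 < t" "t < x"
    thus "\<exists>y. DERIV H t :> y \<and> y > 0" using d derivL_pos[of t] unfolding D_def by blast
  next
    show "continuous_on {0..x} H"
      using d by (intro continuous_at_imp_continuous_on) (blast intro: DERIV_isCont)
  qed
  hence h: "x < sinh x * cosh x powr (-1/3)" unfolding H_def by simp
  define c where "c = cosh x powr (1/3)"
  have cpos: "c > 0" unfolding c_def by simp
  have "cosh x powr (-1/3) = 1 / c" using powr_minus_divide[of "cosh x" "1/3"] unfolding c_def by simp
  hence "x < sinh x / c" using h by simp
  hence "x * c < sinh x" using cpos by (simp add: less_divide_eq)
  thus ?thesis unfolding c_def .
qed
lemma expr_eq:
  fixes x p :: real assumes "x > 0"
  shows "2/3 * (sinh x / x) powr p + 1/3 * (tanh x / x) powr p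
       = (sinh x / x) powr p * (2 + cosh x powr (-p)) / 3"
proof -
  have "tanh x / x = (sinh x / x) / cosh x" by (simp add: tanh_def)
  hence "(tanh x / x) powr p = (sinh x / x) powr p / cosh x powr p"
    by (simp only: powr_divide)
  also have "\<dots> = (sinh x / x) powr p * cosh x powr (-p)"
    by (simp only: powr_minus divide_inverse)
  finally have "(tanh x / x) powr p = (sinh x / x) powr p * cosh x powr (-p)" .
  thus ?thesis by (simp add: field_simps)
qed

lemma case_pos:
  fixes x p :: real assumes "x > 0" "p > 0"
  shows "(sinh x / x) powr p * (2 + cosh x powr (-p)) / 3 > 1"
proof -
  define s where "s = sinh x / x"
  define c where "c = cosh x"
  have c1: "c \<ge> 1" unfolding c_def by (rule cosh_real_ge_1)
  have sl: "c powr (1/3) < s" unfolding s_def c_def using sinh_lower[OF assms(1)] assms(1)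
    by (simp add: less_divide_eq mult.commute)
  define z where "z = c powr (p/3)"
  have z1: "z \<ge> 1" unfolding z_def using c1 assms(2) by (simp add: ge_one_powr_ge_zero)
  have "z < s powr p" unfolding z_def using powr_less_mono2[OF assms(2) _ sl] c1
    by (simp add: powr_powr)
  have cz: "c powr p = z^3" unfolding z_def using c1 by (simp add: powr_power)
  have cm: "c powr (-p) = 1 / z^3" using cz by (simp add: powr_minus divide_inverse)
  have pos: "2 + 1/z^3 > 0" using z1 by (simp add: add_pos_nonneg)
  have "1 \<le> z * (2 + 1/z^3) / 3"
  proof -
    have "(z-1)^2 * (2*z+1) \<ge> 0" using z1 by simp
    hence "3*z^2 \<le> 2*z^3 + 1" by (simp add: algebra_simps power2_eq_square power3_eq_cube)
    moreover have "z * (2 + 1/z^3) / 3 = (2*z^3+1) / (3*z^2)" using z1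
      by (simp add: field_simps power2_eq_square power3_eq_cube)
    ultimately show ?thesis using z1 by (simp add: le_divide_eq)
  qed
  also have "z * (2 + 1/z^3) / 3 < s powr p * (2 + 1/z^3) / 3"
    using \<open>z < s powr p\<close> pos by (simp add: divide_strict_right_mono)
  finally have "1 < s powr p * (2 + 1/z^3) / 3" .
  moreover have "cosh x powr (-p) = 1/z^3" using cm unfolding c_def .
  ultimately show ?thesis unfolding s_def by simp
qed

lemma case_neg:
  fixes x p :: real assumes "x > 0" "p \<le> -4/5"
  shows "(sinh x / x) powr p * (2 + cosh x powr (-p)) / 3 > 1"
proof -
  define s where "s = sinh x / x"
  define c where "c = cosh x"
  define r where "r = -p"
  have r: "r \<ge> 4/5" unfolding r_def using assms by simp
  have c1: "c \<ge> 1" unfolding c_def by (rule cosh_real_ge_1)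
  have spos: "s > 0" unfolding s_def using assms(1) by (simp add: sinh_real_pos_iff)
  define a where "a = c powr (4/5)"
  have a1: "a \<ge> 1" unfolding a_def using c1 by (simp add: ge_one_powr_ge_zero)
  define M where "M = (2 + a)/3"
  have Mpos: "M > 0" unfolding M_def using a1 by simp
  have su: "s < M powr (5/4)" unfolding s_def M_def a_def c_def using sinh_upper[OF assms(1)] assms(1)
    by (simp add: divide_less_eq mult.commute)
  define q where "q = 5*r/4"
  have q1: "q \<ge> 1" unfolding q_def using r by simp
  have "s powr r < (M powr (5/4)) powr r"
    using powr_less_mono2[of r s "M powr (5/4)"] r spos su by simp
  also have "\<dots> = M powr q" unfolding q_def by (simp add: powr_powr)
  also have "M powr q \<le> (2 + c powr r)/3"
  proof -
    have cv: "convex_on {0<..} (\<lambda>x::real. x powr q)" by (rule powr_convex[OF q1])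
    have "((1 - 1/3) *\<^sub>R 1 + (1/3) *\<^sub>R a) powr q \<le> (1 - 1/3) * 1 powr q + (1/3) * a powr q"
      by (rule convex_onD[OF cv]) (use a1 in auto)
    moreover have "a powr q = c powr r" unfolding a_def q_def by (simp add: powr_powr)
    moreover have "(1 - 1/3) *\<^sub>R 1 + (1/3) *\<^sub>R a = M" unfolding M_def by simp
    ultimately show ?thesis by simp
  qed
  finally have lt: "s powr r < (2 + c powr r) / 3" .
  have "s powr p = 1 / s powr r" unfolding r_def using spos by (simp add: powr_minus divide_inverse)
  hence "s powr p * (2 + c powr r) / 3 = ((2 + c powr r) / 3) / s powr r" by simp
  also have "\<dots> > 1" using lt spos by (simp add: less_divide_eq)
  finally show ?thesis unfolding s_def c_def r_def by simp
qed

lemma lim_expr: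
  fixes p :: real
  shows "((\<lambda>x::real. (2/3 * (sinh x / x) powr p + 1/3 * (tanh x / x) powr p - 1) / x^4) \<longlongrightarrow> p*(4+5*p)/180) (at_right 0)"
  apply real_asymp
  apply (simp add: field_simps)
  done


theorem proposition4p3:
  fixes p :: real
  assumes "p \<noteq> 0"
  shows "(\<forall>x::real. x > 0 \<longrightarrow>
            2/3 * (sinh x / x) powr p + 1/3 * (tanh x / x) powr p > 1)
         \<longleftrightarrow> (p > 0 \<or> p \<le> -4/5)"
proof
  assume H: "\<forall>x::real. x > 0 \<longrightarrow> 2/3 * (sinh x / x) powr p + 1/3 * (tanh x / x) powr p > 1"
  show "p > 0 \<or> p \<le> -4/5"
  proof (rule ccontr)
    assume "\<not> (p > 0 \<or> p \<le> -4/5)"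
    hence p: "p < 0" "p > -4/5" using assms by auto
    have "p*(4+5*p)/180 < 0" using p by (simp add: mult_neg_pos)
    from order_tendstoD(2)[OF lim_expr this]
    have "eventually (\<lambda>x::real. (2/3 * (sinh x / x) powr p + 1/3 * (tanh x / x) powr p - 1) / x^4 < 0) (at_right 0)" .
    then obtain b :: real where b: "b > 0" "\<forall>y>0. y < b \<longrightarrow> (2/3 * (sinh y / y) powr p + 1/3 * (tanh y / y) powr p - 1) / y^4 < 0"
      unfolding eventually_at_right_field by auto
    define y where "y = b/2"
    have y: "y > 0" "y < b" using b unfolding y_def by auto
    have "(2/3 * (sinh y / y) powr p + 1/3 * (tanh y / y) powr p - 1) / y^4 < 0" using b y by blast
    moreover have "y^4 > 0" using y by simp
    ultimately have "2/3 * (sinh y / y) powr p + 1/3 * (tanh y / y) powr p - 1 < 0"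
      by (simp add: divide_less_0_iff)
    moreover have "2/3 * (sinh y / y) powr p + 1/3 * (tanh y / y) powr p > 1" using H y by blast
    ultimately show False by linarith
  qed
next
  assume "p > 0 \<or> p \<le> -4/5"
  thus "\<forall>x::real. x > 0 \<longrightarrow> 2/3 * (sinh x / x) powr p + 1/3 * (tanh x / x) powr p > 1"
  proof (intro allI impI)
    fix x :: real assume "x > 0"
    thus "2/3 * (sinh x / x) powr p + 1/3 * (tanh x / x) powr p > 1"
      using expr_eq[of x p] case_pos[of x p] case_neg[of x p] \<open>p > 0 \<or> p \<le> -4/5\<close> by auto
  qed
qed

end
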